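(* Let $\mathcal{L}=(L,\wedge,\vee,0,1)$ be a complete lattice. If $p\in L$ is strongly irreducible in $L$, then $p$ is weakly $\wedge$-distributive in $L$.
   Context: $p$ is strongly irreducible if for all $a,b\in L$: $a\wedge b\leq p$ implies $a\leq p$ or $b\leq p$. $p$ is weakly $\wedge$-distributive if whenever $x,y\in L$ satisfy $x\wedge y=0$, one has $p=(x\vee p)\wedge(y\vee p)$. *)

theory Defs
  imports Main
begin

definition strongly_irreducible :: "'a::complete_lattice \<Rightarrow> bool" where
  "strongly_irreducible p \<longleftrightarrow> (\<forall>a b. inf a b \<le> p \<longrightarrow> a \<le> p \<or> b \<le> p)"

definition weakly_inf_distributive :: "'a::complete_lattice \<Rightarrow> bool" where
  "weakly_inf_distributive p \<longleftrightarrow>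
     (\<forall>x y. inf x y = bot \<longrightarrow> p = inf (sup x p) (sup y p))"

end

theory Submission
  imports Defs
begin

theorem lemma1p10:
  fixes p :: "'a::complete_lattice"
  assumes "strongly_irreducible p"
  shows "weakly_inf_distributive p"
  unfolding weakly_inf_distributive_def
proof (intro allI impI)
  fix x y :: 'a
  assume h: "inf x y = bot"
  then have "inf x y \<le> p" by simp
  then have "x \<le> p \<or> y \<le> p" using assms unfolding strongly_irreducible_def by blast
  then show "p = inf (sup x p) (sup y p)"
  proof
    assume "x \<le> p"
    then have "sup x p = p" by (simp add: sup_absorb2)
    then show ?thesis by (simp add: inf_absorb1)
  next
    assume "y \<le> p"
    then have "sup y p = p" by (simp add: sup_absorb2)
    then show ?thesis by (simp add: inf_absorb2)
  qed
qed

end
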